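(* Let $P$ be a labeled protein tree on a protein set $\mathcal{P}$ (with respect to a gene tree $G$ and map $g:\mathcal{P}\to\mathcal{G}$), let $\mathbb{P}$ be the set of all inclusion-wise maximum creation-free protein subtrees of $P$, and let $\mathbb{P}_{span}$ be the span partition of $\mathcal{P}$ according to $\mathbb{P}$. If $P$ contains at least one node labeled $Creat$, then there exist two distinct sets $S_u,S_v\in\mathbb{P}_{span}$ such that $S_u$, $S_v$ and $S_u\cup S_v$ are each the leaf set of a complete subtree of $P$, and moreover: (1) $l_P(lca_P(S_u\cup S_v))=Creat$; (2) for every $t\in\{u,v\}$ and every $P_i\in span(S_t)$, $P|_{S_t}=P_i|_{S_t}$; (3) $span(S_u)\cap span(S_v)=\emptyset$; (4) $\{P_i|_{\mathcal{L}(P_i)-S_u} : P_i\in span(S_u)\} = \{P_i|_{\mathcal{L}(P_i)-S_v} : P_i\in span(S_v)\}$.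
   Context: Trees are rooted binary with leaves labeled bijectively by a finite set. $T[x]$ is the complete subtree of $T$ rooted at node $x$; a complete subtree is one of this form. $\mathcal{L}(T)$ is the leaf set, $x_l,x_r$ the children of an internal node $x$, $lca_T(L')$ the lowest common ancestor of $L'$. For $L'\subseteq\mathcal{L}(T)$, $T|_{L'}$ is the tree on $L'$ obtained from the subtree of $T$ spanned by $L'$, rooted at $lca_T(L')$, by suppressing all non-root nodes of degree 2. Setting: $\mathcal{P}$ (proteins), $\mathcal{G}$ (genes), surjective $g:\mathcal{P}\to\mathcal{G}$; $G$ a gene tree on $\mathcal{G}$ whose internal nodes are labeled $Spec$ or $Dup$ (via LCA-reconciliation with a species tree); $P$ a protein tree on $\mathcal{P}$. Extend $g$ to internal nodes of $P$ by $g(x)=lca_G(\{g(x'):x'\in\mathcal{L}(P[x])\})$. The labeling $l_P$ of internal nodes of $P$: $l_P(x)=Creat$ if $g(x)=g(x_l)$ or $g(x)=g(x_r)$; otherwise $l_P(x)$ equals the label ($Spec$ or $Dup$) of $g(x)$ in $G$. A labeled protein tree is $P$ together with $l_P$. Two proteins $x,y$ are orthologs if $l_P(lca_P(\{x,y\}))\neq Creat$. A creation-free protein subtree of $P$ is $P|_{L'}$ for $L'\subseteq\mathcal{P}$ in which every pair of proteins are orthologs; it is inclusion-wise maximum if $L'$ is maximal under inclusion among such sets. Write $\mathbb{P}=\{P_1,\dots,P_k\}$ for the set of all such maximum subtrees. For $x\in\mathcal{P}$, $span(x)=\{P_i\in\mathbb{P}: x\in\mathcal{L}(P_i)\}$.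 The span partition $\mathbb{P}_{span}$ is the partition of $\mathcal{P}$ into classes of proteins having equal $span$; for a class $S_t$, $span(S_t)$ is the common value $span(x)$, $x\in S_t$. *)

theory Defs
  imports Main
begin

(* Rooted binary trees with labeled leaves.  A node of a tree is identified with
   the complete subtree rooted at it (leaves are labeled bijectively, see wf_tree). *)
datatype 'a tree = Leaf 'a | Node "'a tree" "'a tree"

datatype label = Spec | Dup | Creat

fun leaves :: "'a tree \<Rightarrow> 'a set" where
  "leaves (Leaf a) = {a}"
| "leaves (Node l r) = leaves l \<union> leaves r"

fun subtrees :: "'a tree \<Rightarrow> 'a tree set" where
  "subtrees (Leaf a) = {Leaf a}"
| "subtrees (Node l r) = insert (Node l r) (subtrees l \<union> subtrees r)"

fun is_node :: "'a tree \<Rightarrow> bool" where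
  "is_node (Leaf _) = False"
| "is_node (Node _ _) = True"

fun wf_tree :: "'a tree \<Rightarrow> bool" where
  "wf_tree (Leaf _) = True"
| "wf_tree (Node l r) = (wf_tree l \<and> wf_tree r \<and> leaves l \<inter> leaves r = {})"

definition lca :: "'a tree \<Rightarrow> 'a set \<Rightarrow> 'a tree" where
  "lca T X = (THE s. s \<in> subtrees T \<and> X \<subseteq> leaves s \<and>
       (\<forall>s'\<in>subtrees T. X \<subseteq> leaves s' \<longrightarrow> leaves s \<subseteq> leaves s'))"

(* restriction T|_L (None = empty tree); degree-2 nodes are suppressed *)
fun restr :: "'a set \<Rightarrow> 'a tree \<Rightarrow> 'a tree option" where
  "restr L (Leaf a) = (if a \<in> L then Some (Leaf a) else None)"
| "restr L (Node l r) = (case (restr L l, restr L r) of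
      (Some a, Some b) \<Rightarrow> Some (Node a b)
    | (Some a, None) \<Rightarrow> Some a
    | (None, b) \<Rightarrow> b)"

definition gmap :: "'g tree \<Rightarrow> ('p \<Rightarrow> 'g) \<Rightarrow> 'p tree \<Rightarrow> 'g tree" where
  "gmap G g x = lca G (g ` leaves x)"

(* labeling l_P of internal nodes of P; lab is the Spec/Dup labeling of G *)
fun node_label :: "'g tree \<Rightarrow> ('g tree \<Rightarrow> label) \<Rightarrow> ('p \<Rightarrow> 'g) \<Rightarrow> 'p tree \<Rightarrow> label" where
  "node_label G lab g (Leaf _) = undefined"
| "node_label G lab g (Node l r) =
     (if gmap G g (Node l r) = gmap G g l \<or> gmap G g (Node l r) = gmap G g r
      then Creat else lab (gmap G g (Node l r)))"

definition orth :: "'g tree \<Rightarrow> ('g tree \<Rightarrow> label) \<Rightarrow> ('p \<Rightarrow> 'g) \<Rightarrow> 'p tree \<Rightarrow> 'p \<Rightarrow> 'p \<Rightarrow> bool" where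
  "orth G lab g P x y = (node_label G lab g (lca P {x, y}) \<noteq> Creat)"

definition creation_free :: "'g tree \<Rightarrow> ('g tree \<Rightarrow> label) \<Rightarrow> ('p \<Rightarrow> 'g) \<Rightarrow> 'p tree \<Rightarrow> 'p set \<Rightarrow> bool" where
  "creation_free G lab g P L = (L \<noteq> {} \<and> L \<subseteq> leaves P \<and>
      (\<forall>x\<in>L. \<forall>y\<in>L. x \<noteq> y \<longrightarrow> orth G lab g P x y))"

definition max_cf :: "'g tree \<Rightarrow> ('g tree \<Rightarrow> label) \<Rightarrow> ('p \<Rightarrow> 'g) \<Rightarrow> 'p tree \<Rightarrow> 'p set \<Rightarrow> bool" where
  "max_cf G lab g P L = (creation_free G lab g P L \<and>
      (\<forall>L'. creation_free G lab g P L' \<longrightarrow> L \<subseteq> L' \<longrightarrow> L' = L))"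

definition max_subtrees :: "'g tree \<Rightarrow> ('g tree \<Rightarrow> label) \<Rightarrow> ('p \<Rightarrow> 'g) \<Rightarrow> 'p tree \<Rightarrow> 'p tree set" where
  "max_subtrees G lab g P = {the (restr L P) | L. max_cf G lab g P L}"

definition span :: "'g tree \<Rightarrow> ('g tree \<Rightarrow> label) \<Rightarrow> ('p \<Rightarrow> 'g) \<Rightarrow> 'p tree \<Rightarrow> 'p \<Rightarrow> 'p tree set" where
  "span G lab g P x = {Pi \<in> max_subtrees G lab g P. x \<in> leaves Pi}"

definition span_partition :: "'g tree \<Rightarrow> ('g tree \<Rightarrow> label) \<Rightarrow> ('p \<Rightarrow> 'g) \<Rightarrow> 'p tree \<Rightarrow> 'p set set" where
  "span_partition G lab g P =
     (\<lambda>x. {y \<in> leaves P. span G lab g P y = span G lab g P x}) ` leaves P"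

definition span_of :: "'g tree \<Rightarrow> ('g tree \<Rightarrow> label) \<Rightarrow> ('p \<Rightarrow> 'g) \<Rightarrow> 'p tree \<Rightarrow> 'p set \<Rightarrow> 'p tree set" where
  "span_of G lab g P S = span G lab g P (SOME x. x \<in> S)"

end

theory Submission
  imports Defs
begin


lemma leaves_nonempty: "leaves t \<noteq> {}" by (induction t) auto
lemma finite_leaves: "finite (leaves t)" by (induction t) auto
lemma self_subtree: "t \<in> subtrees t" by (cases t) auto
lemma subtrees_leaves: "s \<in> subtrees t \<Longrightarrow> leaves s \<subseteq> leaves t" by (induction t) auto
lemma subtrees_trans: "s \<in> subtrees t \<Longrightarrow> u \<in> subtrees s \<Longrightarrow> u \<in> subtrees t"
  by (induction t) auto
lemma subtrees_wf: "wf_tree t \<Longrightarrow> s \<in> subtrees t \<Longrightarrow> wf_tree s" by (induction t) auto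
lemma subtrees_proper: "wf_tree t \<Longrightarrow> s \<in> subtrees t \<Longrightarrow> leaves t \<subseteq> leaves s \<Longrightarrow> s = t"
proof (induction t)
  case (Leaf x) then show ?case by auto
next
  case (Node l r)
  show ?case
  proof (rule ccontr)
    assume "s \<noteq> Node l r"
    then have "s \<in> subtrees l \<or> s \<in> subtrees r" using Node.prems by auto
    then have "leaves s \<subseteq> leaves l \<or> leaves s \<subseteq> leaves r" using subtrees_leaves by blast
    then show False using Node.prems leaves_nonempty[of l] leaves_nonempty[of r] by auto
  qed
qed

lemma laminar: "wf_tree t \<Longrightarrow> s1 \<in> subtrees t \<Longrightarrow> s2 \<in> subtrees t \<Longrightarrow>
   s1 \<in> subtrees s2 \<or> s2 \<in> subtrees s1 \<or> leaves s1 \<inter> leaves s2 = {}"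
proof (induction t)
  case (Leaf x) then show ?case by auto
next
  case (Node l r)
  show ?case
  proof (cases "s1 = Node l r \<or> s2 = Node l r")
    case True then show ?thesis using Node.prems by auto
  next
    case False
    then have h1: "s1 \<in> subtrees l \<or> s1 \<in> subtrees r" and h2: "s2 \<in> subtrees l \<or> s2 \<in> subtrees r"
      using Node.prems by auto
    show ?thesis
    proof -
      { assume "s1 \<in> subtrees l" "s2 \<in> subtrees r"
        then have ?thesis using subtrees_leaves[of s1 l] subtrees_leaves[of s2 r] Node.prems by auto }
      moreover
      { assume "s1 \<in> subtrees r" "s2 \<in> subtrees l"
        then have ?thesis using subtrees_leaves[of s1 r] subtrees_leaves[of s2 l] Node.prems by auto }
      ultimately show ?thesis using h1 h2 Node.IH Node.prems by auto
    qed
  qed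
qed

lemma subtree_of_leaves: "wf_tree t \<Longrightarrow> s1 \<in> subtrees t \<Longrightarrow> s2 \<in> subtrees t \<Longrightarrow>
   leaves s1 \<subseteq> leaves s2 \<Longrightarrow> s1 \<in> subtrees s2"
  using laminar[of t s1 s2] subtrees_proper[of s1 s2] subtrees_wf[of t s1] leaves_nonempty[of s1]
    self_subtree[of s1] by blast

lemma leaves_inj: "wf_tree t \<Longrightarrow> s1 \<in> subtrees t \<Longrightarrow> s2 \<in> subtrees t \<Longrightarrow>
   leaves s1 = leaves s2 \<Longrightarrow> s1 = s2"
  using subtree_of_leaves[of t s1 s2] subtrees_proper[of s2 s1] subtrees_wf[of t s2] by auto

definition lcap where "lcap T X s = (s \<in> subtrees T \<and> X \<subseteq> leaves s \<and>
   (\<forall>s'\<in>subtrees T. X \<subseteq> leaves s' \<longrightarrow> leaves s \<subseteq> leaves s'))"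

lemma lca_eqI: "wf_tree T \<Longrightarrow> lcap T X s \<Longrightarrow> lca T X = s"
  unfolding lca_def
  apply (rule the_equality)
  apply (simp add: lcap_def)
  by (metis lcap_def leaves_inj subset_antisym)

lemma lca_exists: "wf_tree T \<Longrightarrow> s \<in> subtrees T \<Longrightarrow> X \<subseteq> leaves s \<Longrightarrow> X \<noteq> {} \<Longrightarrow> \<exists>s0. lcap T X s0"
proof (induction s)
  case (Leaf a)
  have "lcap T X (Leaf a)" unfolding lcap_def
  proof (intro conjI ballI impI)
    fix s' assume s': "s' \<in> subtrees T" "X \<subseteq> leaves s'"
    have "s' \<in> subtrees (Leaf a) \<or> Leaf a \<in> subtrees s' \<or> leaves s' \<inter> leaves (Leaf a) = {}"
      using laminar[OF Leaf(1) s'(1) Leaf(2)] .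
    then show "leaves (Leaf a) \<subseteq> leaves s'" using s' Leaf subtrees_leaves by fastforce
  qed (use Leaf in auto)
  then show ?case by blast
next
  case (Node l r)
  have lT: "l \<in> subtrees T" and rT: "r \<in> subtrees T"
    using subtrees_trans[OF Node.prems(2)] self_subtree[of l] self_subtree[of r] by auto
  show ?case
  proof (cases "X \<subseteq> leaves l \<or> X \<subseteq> leaves r")
    case True then show ?thesis using Node.IH lT rT Node.prems by blast
  next
    case False
    have "lcap T X (Node l r)" unfolding lcap_def
    proof (intro conjI ballI impI)
      fix s' assume s': "s' \<in> subtrees T" "X \<subseteq> leaves s'"
      have "s' \<in> subtrees (Node l r) \<or> Node l r \<in> subtrees s' \<or> leaves s' \<inter> leaves (Node l r) = {}"
        using laminar[OF Node.prems(1) s'(1) Node.prems(2)] .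
      moreover have "s' \<in> subtrees (Node l r) \<Longrightarrow> s' = Node l r"
        using False s'(2) subtrees_leaves[of s' l] subtrees_leaves[of s' r] by auto
      ultimately show "leaves (Node l r) \<subseteq> leaves s'" using s' Node.prems subtrees_leaves by fastforce
    qed (use Node.prems in auto)
    then show ?thesis by blast
  qed
qed

lemma lca_prop: "wf_tree T \<Longrightarrow> X \<subseteq> leaves T \<Longrightarrow> X \<noteq> {} \<Longrightarrow> lcap T X (lca T X)"
  using lca_exists[of T T X] self_subtree[of T] lca_eqI by metis

lemma restr_None: "restr L T = None \<longleftrightarrow> L \<inter> leaves T = {}"
  by (induction T) (auto split: option.splits)

lemma restr_leaves: "restr L T = Some t \<Longrightarrow> leaves t = L \<inter> leaves T"
  by (induction T arbitrary: t) (auto split: option.splits if_splits simp: restr_None)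

lemma restr_restr: "restr L T = Some t \<Longrightarrow> restr S t = restr (S \<inter> L) T"
proof (induction T arbitrary: t)
  case (Leaf x) then show ?case by (auto split: if_splits)
next
  case (Node l r)
  show ?case
  proof (cases "restr L l")
    case None
    then have "restr (S \<inter> L) l = None" using restr_None by blast
    then show ?thesis using Node None by (auto split: option.splits)
  next
    case (Some a)
    show ?thesis
    proof (cases "restr L r")
      case None
      then have "restr (S \<inter> L) r = None" using restr_None by blast
      then show ?thesis using Node Some None by (auto split: option.splits)
    next
      case (Some b)
      then show ?thesis using Node \<open>restr L l = Some a\<close> by (auto split: option.splits)
    qed
  qed
qed



lemma orth_sym: "orth G lab g P x y = orth G lab g P y x"
  by (simp add: orth_def insert_commute)

locale sib =
  fixes G :: "'g tree" and lab :: "'g tree \<Rightarrow> label" and g :: "'p \<Rightarrow> 'g" and P :: "'p tree"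
    and A B :: "'p set"
  assumes AP: "A \<subseteq> leaves P" and BP: "B \<subseteq> leaves P" and AB: "A \<inter> B = {}"
    and Ane: "A \<noteq> {}" and Bne: "B \<noteq> {}"
    and notorth: "\<And>u v. u \<in> A \<Longrightarrow> v \<in> B \<Longrightarrow> \<not> orth G lab g P u v"
    and inA: "\<And>u u'. u \<in> A \<Longrightarrow> u' \<in> A \<Longrightarrow> u \<noteq> u' \<Longrightarrow> orth G lab g P u u'"
    and inB: "\<And>u u'. u \<in> B \<Longrightarrow> u' \<in> B \<Longrightarrow> u \<noteq> u' \<Longrightarrow> orth G lab g P u u'"
    and out: "\<And>u u' w. u \<in> A \<union> B \<Longrightarrow> u' \<in> A \<union> B \<Longrightarrow> w \<in> leaves P \<Longrightarrow> w \<notin> A \<union> B \<Longrightarrow>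
       orth G lab g P u w = orth G lab g P u' w"

lemma sib_sym: assumes s: "sib G lab g P A B" shows "sib G lab g P B A"
proof -
  interpret sib G lab g P A B by (rule s)
  show ?thesis
  proof (unfold_locales)
    show "B \<subseteq> leaves P" using BP .
    show "A \<subseteq> leaves P" using AP .
    show "B \<inter> A = {}" using AB by blast
    show "B \<noteq> {}" using Bne .
    show "A \<noteq> {}" using Ane .
    show "\<And>u v. u \<in> B \<Longrightarrow> v \<in> A \<Longrightarrow> \<not> orth G lab g P u v" using notorth orth_sym by metis
    show "\<And>u u'. u \<in> B \<Longrightarrow> u' \<in> B \<Longrightarrow> u \<noteq> u' \<Longrightarrow> orth G lab g P u u'" using inB by blast
    show "\<And>u u'. u \<in> A \<Longrightarrow> u' \<in> A \<Longrightarrow> u \<noteq> u' \<Longrightarrow> orth G lab g P u u'" using inA by blast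
    show "\<And>u u' w. u \<in> B \<union> A \<Longrightarrow> u' \<in> B \<union> A \<Longrightarrow> w \<in> leaves P \<Longrightarrow> w \<notin> B \<union> A \<Longrightarrow>
       orth G lab g P u w = orth G lab g P u' w" using out by blast
  qed
qed

context sib begin

lemma cf_disj: "creation_free G lab g P L \<Longrightarrow> L \<inter> A \<noteq> {} \<Longrightarrow> L \<inter> B = {}"
proof (rule ccontr)
  assume cf: "creation_free G lab g P L" and a: "L \<inter> A \<noteq> {}" and b: "L \<inter> B \<noteq> {}"
  obtain u where u: "u \<in> L" "u \<in> A" using a by blast
  obtain v where v: "v \<in> L" "v \<in> B" using b by blast
  have "u \<noteq> v" using u v AB by blast
  then have "orth G lab g P u v" using cf u v unfolding creation_free_def by blast
  then show False using notorth u v by blast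
qed

lemma cf_add: assumes cf: "creation_free G lab g P L" and ne: "L \<inter> A \<noteq> {}"
  shows "creation_free G lab g P (L \<union> A)"
proof -
  obtain a0 where a0: "a0 \<in> L" "a0 \<in> A" using ne by blast
  have LB: "L \<inter> B = {}" using cf_disj[OF cf ne] .
  have L: "L \<noteq> {}" "L \<subseteq> leaves P" "\<And>x y. x \<in> L \<Longrightarrow> y \<in> L \<Longrightarrow> x \<noteq> y \<Longrightarrow> orth G lab g P x y"
    using cf unfolding creation_free_def by auto
  have key: "orth G lab g P x y" if "x \<in> A" "y \<in> L" "y \<notin> A" for x y
  proof -
    have "y \<notin> A \<union> B" using that LB by blast
    then have "orth G lab g P x y = orth G lab g P a0 y" using out[of x a0 y] that a0 L(2) by blast
    moreover have "orth G lab g P a0 y" using L(3)[of a0 y] a0 that by blast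
    ultimately show ?thesis by simp
  qed
  show ?thesis unfolding creation_free_def
  proof (intro conjI ballI impI)
    show "L \<union> A \<noteq> {}" using L(1) by blast
    show "L \<union> A \<subseteq> leaves P" using L(2) AP by blast
    fix x y assume "x \<in> L \<union> A" "y \<in> L \<union> A" "x \<noteq> y"
    then show "orth G lab g P x y" proof (cases "x \<in> A")
      case True then show ?thesis using inA key \<open>x \<in> L \<union> A\<close> \<open>y \<in> L \<union> A\<close> \<open>x \<noteq> y\<close> by blast
    next
      case False
      show ?thesis proof (cases "y \<in> A")
        case True then show ?thesis using key[of y x] False orth_sym[of G lab g P x y] \<open>x \<in> L \<union> A\<close> by simp
      next
        case False then show ?thesis using L(3) \<open>x \<notin> A\<close> \<open>x \<in> L \<union> A\<close> \<open>y \<in> L \<union> A\<close> \<open>x \<noteq> y\<close> by blast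
      qed
    qed
  qed
qed

lemma mx_full: "max_cf G lab g P L \<Longrightarrow> L \<inter> A \<noteq> {} \<Longrightarrow> A \<subseteq> L"
  unfolding max_cf_def using cf_add by blast

lemma cf_swap: assumes cf: "creation_free G lab g P L" and AL: "A \<subseteq> L"
  shows "creation_free G lab g P ((L - A) \<union> B)"
proof -
  obtain a0 where a0: "a0 \<in> L" "a0 \<in> A" using Ane AL by blast
  have LB: "L \<inter> B = {}" using cf_disj[OF cf] a0 by blast
  have L: "L \<noteq> {}" "L \<subseteq> leaves P" "\<And>x y. x \<in> L \<Longrightarrow> y \<in> L \<Longrightarrow> x \<noteq> y \<Longrightarrow> orth G lab g P x y"
    using cf unfolding creation_free_def by auto
  have key: "orth G lab g P x y" if "x \<in> B" "y \<in> L" "y \<notin> A" for x y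
  proof -
    have "y \<notin> A \<union> B" using that LB by blast
    then have "orth G lab g P x y = orth G lab g P a0 y" using out[of x a0 y] that a0 L(2) by blast
    moreover have "orth G lab g P a0 y" using L(3)[of a0 y] a0 that by blast
    ultimately show ?thesis by simp
  qed
  show ?thesis unfolding creation_free_def
  proof (intro conjI ballI impI)
    show "L - A \<union> B \<noteq> {}" using Bne by blast
    show "L - A \<union> B \<subseteq> leaves P" using L(2) BP by blast
    fix x y assume "x \<in> L - A \<union> B" "y \<in> L - A \<union> B" "x \<noteq> y"
    then show "orth G lab g P x y" proof (cases "x \<in> B")
      case True then show ?thesis proof (cases "y \<in> B")
        case True then show ?thesis using inB \<open>x \<in> B\<close> \<open>x \<noteq> y\<close> by blast
      next
        case False then show ?thesis using key[of x y] \<open>x \<in> B\<close> \<open>y \<in> L - A \<union> B\<close> by blast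
      qed
    next
      case False
      show ?thesis proof (cases "y \<in> B")
        case True then show ?thesis using key[of y x] False orth_sym[of G lab g P x y] \<open>x \<in> L - A \<union> B\<close> by simp
      next
        case False then show ?thesis using L(3) \<open>x \<notin> B\<close> \<open>x \<in> L - A \<union> B\<close> \<open>y \<in> L - A \<union> B\<close> \<open>x \<noteq> y\<close> by blast
      qed
    qed
  qed
qed

end

lemma mx_swap: assumes s: "sib G lab g P A B" and mx: "max_cf G lab g P L" and AL: "A \<subseteq> L"
  shows "max_cf G lab g P ((L - A) \<union> B)"
proof -
  interpret s1: sib G lab g P A B by (rule s)
  interpret s2: sib G lab g P B A by (rule sib_sym[OF s])
  have cf: "creation_free G lab g P L" using mx max_cf_def by blast
  have LB: "L \<inter> B = {}" using s1.cf_disj[OF cf] AL s1.Ane by blast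
  show ?thesis unfolding max_cf_def
  proof (intro conjI allI impI)
    show "creation_free G lab g P (L - A \<union> B)" using s1.cf_swap[OF cf AL] .
    fix L'' assume cf'': "creation_free G lab g P L''" and sub: "L - A \<union> B \<subseteq> L''"
    have BL: "B \<subseteq> L''" using sub by blast
    have L''A: "L'' \<inter> A = {}" using s2.cf_disj[OF cf''] BL s1.Bne by blast
    have cf3: "creation_free G lab g P ((L'' - B) \<union> A)" using s2.cf_swap[OF cf'' BL] .
    have "L \<subseteq> (L'' - B) \<union> A" using sub LB by blast
    then have "(L'' - B) \<union> A = L" using mx cf3 unfolding max_cf_def by blast
    then show "L'' = L - A \<union> B" using sub L''A s1.AB by blast
  qed
qed



lemma leaves_tr: assumes "max_cf G lab g P L"
  shows "restr L P = Some (the (restr L P))" "leaves (the (restr L P)) = L"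
proof -
  have cf: "creation_free G lab g P L" using assms unfolding max_cf_def by (rule conjunct1)
  have L: "L \<noteq> {}" "L \<subseteq> leaves P" using cf unfolding creation_free_def by (blast, blast)
  then have "restr L P \<noteq> None" using restr_None[of L P] L by auto
  then show 1: "restr L P = Some (the (restr L P))" by (metis option.collapse)
  show "leaves (the (restr L P)) = L" using restr_leaves[OF 1] L by blast
qed

lemma span_char: "span G lab g P y = {the (restr L P) | L. max_cf G lab g P L \<and> y \<in> L}"
proof
  show "span G lab g P y \<subseteq> {the (restr L P) | L. max_cf G lab g P L \<and> y \<in> L}"
  proof
    fix Pi assume "Pi \<in> span G lab g P y"
    then obtain L where L: "max_cf G lab g P L" "Pi = the (restr L P)" "y \<in> leaves Pi"
      unfolding span_def max_subtrees_def by blast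
    then have "y \<in> L" using leaves_tr(2)[OF L(1)] by simp
    then show "Pi \<in> {the (restr L P) | L. max_cf G lab g P L \<and> y \<in> L}" using L by blast
  qed
  show "{the (restr L P) | L. max_cf G lab g P L \<and> y \<in> L} \<subseteq> span G lab g P y"
  proof
    fix Pi assume "Pi \<in> {the (restr L P) | L. max_cf G lab g P L \<and> y \<in> L}"
    then obtain L where L: "max_cf G lab g P L" "Pi = the (restr L P)" "y \<in> L" by blast
    then have "y \<in> leaves Pi" using leaves_tr(2)[OF L(1)] by simp
    moreover have "Pi \<in> max_subtrees G lab g P" unfolding max_subtrees_def using L by blast
    ultimately show "Pi \<in> span G lab g P y" unfolding span_def by blast
  qed
qed

lemma exists_mx: assumes y: "y \<in> leaves P" shows "\<exists>L. max_cf G lab g P L \<and> y \<in> L"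
proof -
  let ?F = "{L. creation_free G lab g P L \<and> y \<in> L}"
  have fin: "finite ?F"
    by (rule finite_subset[of _ "Pow (leaves P)"]) (auto simp: creation_free_def finite_leaves)
  have "{y} \<in> ?F" using y by (auto simp: creation_free_def)
  then obtain m where m: "m \<in> ?F" "\<And>b. b \<in> ?F \<Longrightarrow> m \<subseteq> b \<Longrightarrow> m = b"
    using finite_has_maximal[OF fin] by blast
  have "max_cf G lab g P m" unfolding max_cf_def
  proof (intro conjI allI impI)
    show "creation_free G lab g P m" using m(1) by blast
    fix L' assume "creation_free G lab g P L'" "m \<subseteq> L'"
    then show "L' = m" using m by blast
  qed
  then show ?thesis using m(1) by blast
qed

context sib begin

lemma span_A: "y \<in> A \<Longrightarrow> span G lab g P y = {the (restr L P) | L. max_cf G lab g P L \<and> A \<subseteq> L}"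
  unfolding span_char using mx_full by blast

lemma class_A: assumes y: "y \<in> A" shows "{w \<in> leaves P. span G lab g P w = span G lab g P y} = A"
proof
  show "A \<subseteq> {w \<in> leaves P. span G lab g P w = span G lab g P y}"
    using span_A y AP by auto
  show "{w \<in> leaves P. span G lab g P w = span G lab g P y} \<subseteq> A"
  proof
    fix w assume "w \<in> {w \<in> leaves P. span G lab g P w = span G lab g P y}"
    then have w: "w \<in> leaves P" "span G lab g P w = span G lab g P y" by auto
    show "w \<in> A"
    proof (rule ccontr)
      assume wA: "w \<notin> A"
      have yP: "y \<in> leaves P" using y AP by blast
      obtain L0 where L0: "max_cf G lab g P L0" "y \<in> L0" using exists_mx[OF yP] by blast
      have AL0: "A \<subseteq> L0" using mx_full[OF L0(1)] L0(2) y by blast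
      have "the (restr L0 P) \<in> span G lab g P y" unfolding span_char using L0 by blast
      then have "the (restr L0 P) \<in> span G lab g P w" using w by simp
      then have wL0: "w \<in> L0" unfolding span_def using leaves_tr(2)[OF L0(1)] by blast
      have cf0: "creation_free G lab g P L0" using L0(1) unfolding max_cf_def by (rule conjunct1)
      have "L0 \<inter> B = {}" using cf_disj[OF cf0] y L0 by blast
      then have wB: "w \<notin> B" using wL0 by blast
      let ?L1 = "(L0 - A) \<union> B"
      have L1: "max_cf G lab g P ?L1" using mx_swap[OF sib_axioms L0(1) AL0] .
      have "w \<in> ?L1" using wL0 wA by blast
      then have "the (restr ?L1 P) \<in> span G lab g P w" unfolding span_char using L1 by blast
      then have "the (restr ?L1 P) \<in> span G lab g P y" using w by simp
      then have "y \<in> ?L1" unfolding span_def using leaves_tr(2)[OF L1] by blast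
      then show False using y AB by blast
    qed
  qed
qed

lemma in_partition: "A \<in> span_partition G lab g P"
proof -
  obtain y where y: "y \<in> A" using Ane by blast
  show ?thesis unfolding span_partition_def using class_A[OF y] y AP by blast
qed

lemma span_of_A: "span_of G lab g P A = {the (restr L P) | L. max_cf G lab g P L \<and> A \<subseteq> L}"
  unfolding span_of_def using span_A someI_ex[of "\<lambda>x. x \<in> A"] Ane by blast

lemma restr_A: "Pi \<in> span_of G lab g P A \<Longrightarrow> restr A P = restr A Pi"
proof -
  assume "Pi \<in> span_of G lab g P A"
  then obtain L where L: "max_cf G lab g P L" "A \<subseteq> L" "Pi = the (restr L P)"
    using span_of_A by blast
  have "restr A Pi = restr (A \<inter> L) P" using restr_restr leaves_tr(1)[OF L(1)] L(3) by metis
  then show ?thesis using L(2) by (simp add: Int_absorb2)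
qed

lemma img_A: "(\<lambda>Pi. restr (leaves Pi - A) Pi) ` span_of G lab g P A
   = {restr (L - A) P | L. max_cf G lab g P L \<and> A \<subseteq> L}"
proof -
  have "restr (leaves (the (restr L P)) - A) (the (restr L P)) = restr (L - A) P"
    if "max_cf G lab g P L" for L
  proof -
    have "restr (leaves (the (restr L P)) - A) (the (restr L P)) = restr ((L - A) \<inter> L) P"
      using restr_restr[OF leaves_tr(1)[OF that]] leaves_tr(2)[OF that] by metis
    also have "(L - A) \<inter> L = L - A" by blast
    finally show ?thesis .
  qed
  then show ?thesis unfolding span_of_A by (auto simp: image_def)
qed

lemma img_sub: "{restr (L - A) P | L. max_cf G lab g P L \<and> A \<subseteq> L}
   \<subseteq> {restr (L - B) P | L. max_cf G lab g P L \<and> B \<subseteq> L}"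
proof
  fix t assume "t \<in> {restr (L - A) P | L. max_cf G lab g P L \<and> A \<subseteq> L}"
  then obtain L where L: "max_cf G lab g P L" "A \<subseteq> L" "t = restr (L - A) P" by blast
  have cf: "creation_free G lab g P L" using L(1) unfolding max_cf_def by (rule conjunct1)
  have LB: "L \<inter> B = {}" using cf_disj[OF cf] L(2) Ane by blast
  have "max_cf G lab g P ((L - A) \<union> B)" using mx_swap[OF sib_axioms L(1,2)] .
  moreover have "((L - A) \<union> B) - B = L - A" using LB AB by blast
  ultimately show "t \<in> {restr (L - B) P | L. max_cf G lab g P L \<and> B \<subseteq> L}"
    using L(3) by (metis (mono_tags, lifting) Un_upper2 mem_Collect_eq)
qed

lemma span_disj: "span_of G lab g P A \<inter> span_of G lab g P B = {}"
proof -
  interpret s2: sib G lab g P B A by (rule sib_sym[OF sib_axioms])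
  show ?thesis
  proof (rule ccontr)
    assume "span_of G lab g P A \<inter> span_of G lab g P B \<noteq> {}"
    then obtain Pi where "Pi \<in> span_of G lab g P A" "Pi \<in> span_of G lab g P B" by blast
    then obtain L L' where L: "max_cf G lab g P L" "A \<subseteq> L" "Pi = the (restr L P)"
      and L': "max_cf G lab g P L'" "B \<subseteq> L'" "Pi = the (restr L' P)"
      using span_of_A s2.span_of_A by blast
    have "L = L'" using leaves_tr(2)[OF L(1)] leaves_tr(2)[OF L'(1)] L(3) L'(3) by simp
    then have "L \<inter> B \<noteq> {}" using L'(2) Bne by blast
    moreover have "L \<inter> B = {}"
    proof -
      have cf: "creation_free G lab g P L" using L(1) unfolding max_cf_def by (rule conjunct1)
      show ?thesis using cf_disj[OF cf] L(2) Ane by blast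
    qed
    ultimately show False by blast
  qed
qed

end



lemma min_exists: "\<exists>x\<in>subtrees T. Q x \<Longrightarrow> \<exists>x\<in>subtrees T. Q x \<and> (\<forall>y\<in>subtrees x. y \<noteq> x \<longrightarrow> \<not> Q y)"
proof (induction T)
  case (Leaf a) then show ?case by auto
next
  case (Node l r)
  show ?case
  proof (cases "\<exists>x\<in>subtrees l. Q x")
    case True then show ?thesis using Node.IH(1) by auto
  next
    case False note Fl = False
    show ?thesis proof (cases "\<exists>x\<in>subtrees r. Q x")
      case True then show ?thesis using Node.IH(2) by auto
    next
      case False
      then have "Q (Node l r)" using Fl Node.prems by auto
      then show ?thesis using Fl False by auto
    qed
  qed
qed

lemma lca_across: assumes wf: "wf_tree P" and x: "Node a b \<in> subtrees P"
  and u: "u \<in> leaves a" and v: "v \<in> leaves b"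
  shows "lca P {u, v} = Node a b"
proof (rule lca_eqI[OF wf])
  have wfx: "wf_tree (Node a b)" using subtrees_wf[OF wf x] .
  then have dis: "leaves a \<inter> leaves b = {}" by simp
  show "lcap P {u, v} (Node a b)" unfolding lcap_def
  proof (intro conjI ballI impI)
    show "Node a b \<in> subtrees P" using x .
    show "{u, v} \<subseteq> leaves (Node a b)" using u v by auto
    fix s' assume s': "s' \<in> subtrees P" "{u, v} \<subseteq> leaves s'"
    have c: "s' \<in> subtrees (Node a b) \<or> Node a b \<in> subtrees s' \<or> leaves s' \<inter> leaves (Node a b) = {}"
      using laminar[OF wf s'(1) x] .
    show "leaves (Node a b) \<subseteq> leaves s'"
    proof -
      { assume "s' \<in> subtrees (Node a b)"
        then have "s' = Node a b \<or> s' \<in> subtrees a \<or> s' \<in> subtrees b" by simp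
        moreover have "s' \<notin> subtrees a"
        proof
          assume "s' \<in> subtrees a"
          then have "v \<in> leaves a" using subtrees_leaves[of s' a] s'(2) by blast
          then show False using v dis by blast
        qed
        moreover have "s' \<notin> subtrees b"
        proof
          assume "s' \<in> subtrees b"
          then have "u \<in> leaves b" using subtrees_leaves[of s' b] s'(2) by blast
          then show False using u dis by blast
        qed
        ultimately have ?thesis by blast }
      moreover
      { assume "Node a b \<in> subtrees s'"
        then have ?thesis using subtrees_leaves by blast }
      moreover
      { assume "leaves s' \<inter> leaves (Node a b) = {}"
        then have ?thesis using s'(2) u by auto }
      ultimately show ?thesis using c by blast
    qed
  qed
qed

lemma lca_inside: assumes wf: "wf_tree P" and c: "c \<in> subtrees P"
  and u: "u \<in> leaves c" and v: "v \<in> leaves c" and uv: "u \<noteq> v"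
  shows "lca P {u, v} \<in> subtrees c \<and> is_node (lca P {u, v})"
proof -
  have X: "{u, v} \<subseteq> leaves P" using subtrees_leaves[OF c] u v by blast
  have lp: "lcap P {u, v} (lca P {u, v})" using lca_prop[OF wf X] by blast
  then have s: "lca P {u, v} \<in> subtrees P" "{u, v} \<subseteq> leaves (lca P {u, v})"
    "leaves (lca P {u, v}) \<subseteq> leaves c"
    unfolding lcap_def using c u v by auto
  have 1: "lca P {u, v} \<in> subtrees c" using subtree_of_leaves[OF wf s(1) c s(3)] .
  have 2: "is_node (lca P {u, v})"
  proof (cases "lca P {u, v}")
    case (Leaf z) then show ?thesis using s(2) uv by auto
  next
    case (Node l r) then show ?thesis by simp
  qed
  show ?thesis using 1 2 by blast
qed

lemma contain_x: assumes wf: "wf_tree P" and x: "x \<in> subtrees P" and s': "s' \<in> subtrees P"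
  and u: "u \<in> leaves s'" "u \<in> leaves x" and w: "w \<in> leaves s'" "w \<notin> leaves x"
  shows "leaves x \<subseteq> leaves s'"
proof -
  have c: "s' \<in> subtrees x \<or> x \<in> subtrees s' \<or> leaves s' \<inter> leaves x = {}"
    using laminar[OF wf s' x] .
  moreover have "s' \<notin> subtrees x" using subtrees_leaves[of s' x] w by blast
  moreover have "leaves s' \<inter> leaves x \<noteq> {}" using u by blast
  ultimately show ?thesis using subtrees_leaves[of x s'] by blast
qed

lemma lca_out: assumes wf: "wf_tree P" and x: "x \<in> subtrees P"
  and u: "u \<in> leaves x" and u': "u' \<in> leaves x" and w: "w \<in> leaves P" "w \<notin> leaves x"
  shows "lca P {u, w} = lca P {u', w}"
proof -
  have X: "{u, w} \<subseteq> leaves P" using subtrees_leaves[OF x] u w by blast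
  define s where "s = lca P {u, w}"
  have lp: "lcap P {u, w} s" using lca_prop[OF wf X] s_def by blast
  then have s: "s \<in> subtrees P" "u \<in> leaves s" "w \<in> leaves s"
    "\<And>s'. s' \<in> subtrees P \<Longrightarrow> {u, w} \<subseteq> leaves s' \<Longrightarrow> leaves s \<subseteq> leaves s'"
    unfolding lcap_def by auto
  have xs: "leaves x \<subseteq> leaves s" using contain_x[OF wf x s(1) s(2) u s(3) w(2)] .
  have "lcap P {u', w} s" unfolding lcap_def
  proof (intro conjI ballI impI)
    show "s \<in> subtrees P" using s(1) .
    show "{u', w} \<subseteq> leaves s" using xs u' s(3) by blast
    fix s' assume s': "s' \<in> subtrees P" "{u', w} \<subseteq> leaves s'"
    have "leaves x \<subseteq> leaves s'" using contain_x[OF wf x s'(1) _ u' _ w(2)] s'(2) by blast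
    then have "{u, w} \<subseteq> leaves s'" using u s'(2) by blast
    then show "leaves s \<subseteq> leaves s'" using s(4)[OF s'(1)] by blast
  qed
  then show ?thesis using lca_eqI[OF wf] s_def by metis
qed

theorem lemma1:
  fixes P :: "'p tree" and G :: "'g tree" and g :: "'p \<Rightarrow> 'g"
    and lab :: "'g tree \<Rightarrow> label"
  assumes "wf_tree P" and "wf_tree G" and "g ` leaves P = leaves G"
    and "\<forall>x\<in>subtrees G. is_node x \<longrightarrow> lab x \<in> {Spec, Dup}"
    and "\<exists>x\<in>subtrees P. is_node x \<and> node_label G lab g x = Creat"
  shows "\<exists>Su\<in>span_partition G lab g P. \<exists>Sv\<in>span_partition G lab g P.
     Su \<noteq> Sv
   \<and> (\<exists>s\<in>subtrees P. leaves s = Su)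
   \<and> (\<exists>s\<in>subtrees P. leaves s = Sv)
   \<and> (\<exists>s\<in>subtrees P. leaves s = Su \<union> Sv)
   \<and> node_label G lab g (lca P (Su \<union> Sv)) = Creat
   \<and> (\<forall>S\<in>{Su, Sv}. \<forall>Pi\<in>span_of G lab g P S. restr S P = restr S Pi)
   \<and> span_of G lab g P Su \<inter> span_of G lab g P Sv = {}
   \<and> (\<lambda>Pi. restr (leaves Pi - Su) Pi) ` span_of G lab g P Su
     = (\<lambda>Pi. restr (leaves Pi - Sv) Pi) ` span_of G lab g P Sv"
proof -
  note wf = assms(1)
  obtain x where x: "x \<in> subtrees P" "is_node x \<and> node_label G lab g x = Creat"
    and mn: "\<forall>y\<in>subtrees x. y \<noteq> x \<longrightarrow> \<not> (is_node y \<and> node_label G lab g y = Creat)"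
    using min_exists[OF assms(5)] by blast
  obtain a b where xab: "x = Node a b" using x(2) by (cases x) auto
  have wfx: "wf_tree (Node a b)" using subtrees_wf[OF wf x(1)] xab by simp
  then have dis: "leaves a \<inter> leaves b = {}" by simp
  have aP: "a \<in> subtrees P" and bP: "b \<in> subtrees P"
    using subtrees_trans[OF x(1)] xab self_subtree[of a] self_subtree[of b] by auto
  have ax: "a \<in> subtrees x" and bx: "b \<in> subtrees x" using xab self_subtree[of a] self_subtree[of b] by auto
  have xP: "Node a b \<in> subtrees P" using x(1) xab by simp
  have creat: "node_label G lab g (Node a b) = Creat" using x(2) xab by simp
  have inside: "orth G lab g P u u'" if c: "c = a \<or> c = b" and u: "u \<in> leaves c" "u' \<in> leaves c" "u \<noteq> u'" for c u u'
  proof -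
    have cP: "c \<in> subtrees P" using c aP bP by blast
    have cx: "c \<in> subtrees x" using c ax bx by blast
    define s where "s = lca P {u, u'}"
    have s: "s \<in> subtrees c" "is_node s" using lca_inside[OF wf cP u] s_def by auto
    have sx: "s \<in> subtrees x" using subtrees_trans[OF cx s(1)] .
    have "s \<noteq> x"
    proof
      assume "s = x"
      then have "leaves x \<subseteq> leaves c" using subtrees_leaves[OF s(1)] by simp
      then show False using xab c dis leaves_nonempty[of a] leaves_nonempty[of b] by auto
    qed
    then have "node_label G lab g s \<noteq> Creat" using mn sx s(2) by blast
    then show ?thesis unfolding orth_def s_def .
  qed
  have sab: "sib G lab g P (leaves a) (leaves b)"
  proof
    show "leaves a \<subseteq> leaves P" using subtrees_leaves[OF aP] .
    show "leaves b \<subseteq> leaves P" using subtrees_leaves[OF bP] .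
    show "leaves a \<inter> leaves b = {}" using dis .
    show "leaves a \<noteq> {}" using leaves_nonempty .
    show "leaves b \<noteq> {}" using leaves_nonempty .
    show "\<not> orth G lab g P u v" if "u \<in> leaves a" "v \<in> leaves b" for u v
      unfolding orth_def using lca_across[OF wf xP that] creat by simp
    show "orth G lab g P u u'" if "u \<in> leaves a" "u' \<in> leaves a" "u \<noteq> u'" for u u'
      using inside[of a u u'] that by blast
    show "orth G lab g P u u'" if "u \<in> leaves b" "u' \<in> leaves b" "u \<noteq> u'" for u u'
      using inside[of b u u'] that by blast
    show "orth G lab g P u w = orth G lab g P u' w"
      if "u \<in> leaves a \<union> leaves b" "u' \<in> leaves a \<union> leaves b" "w \<in> leaves P"
        "w \<notin> leaves a \<union> leaves b" for u u' w
    proof -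
      have hu: "u \<in> leaves (Node a b)" using that(1) by simp
      have hu': "u' \<in> leaves (Node a b)" using that(2) by simp
      have hw: "w \<notin> leaves (Node a b)" using that(4) by simp
      have "lca P {u, w} = lca P {u', w}"
        using lca_out[OF wf xP hu hu' that(3) hw] .
      then show ?thesis unfolding orth_def by simp
    qed
  qed
  interpret s1: sib G lab g P "leaves a" "leaves b" by (rule sab)
  interpret s2: sib G lab g P "leaves b" "leaves a" by (rule sib_sym[OF sab])
  have lcax: "lca P (leaves a \<union> leaves b) = Node a b"
  proof (rule lca_eqI[OF wf])
    show "lcap P (leaves a \<union> leaves b) (Node a b)" unfolding lcap_def using xP by auto
  qed
  have img: "(\<lambda>Pi. restr (leaves Pi - leaves a) Pi) ` span_of G lab g P (leaves a)
     = (\<lambda>Pi. restr (leaves Pi - leaves b) Pi) ` span_of G lab g P (leaves b)"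
    by (simp only: s1.img_A s2.img_A) (rule subset_antisym[OF s1.img_sub s2.img_sub])
  show ?thesis
  proof (rule bexI[where x="leaves a"], rule bexI[where x="leaves b"], intro conjI)
    show "leaves a \<noteq> leaves b" using dis leaves_nonempty[of a] by blast
    show "\<exists>s\<in>subtrees P. leaves s = leaves a" using aP by blast
    show "\<exists>s\<in>subtrees P. leaves s = leaves b" using bP by blast
    show "\<exists>s\<in>subtrees P. leaves s = leaves a \<union> leaves b"
      using xP leaves.simps(2)[of a b] by (rule bexI[rotated])
    show "node_label G lab g (lca P (leaves a \<union> leaves b)) = Creat" using lcax creat by simp
    show "\<forall>S\<in>{leaves a, leaves b}. \<forall>Pi\<in>span_of G lab g P S. restr S P = restr S Pi"
      using s1.restr_A s2.restr_A by blast
    show "span_of G lab g P (leaves a) \<inter> span_of G lab g P (leaves b) = {}" using s1.span_disj .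
    show "(\<lambda>Pi. restr (leaves Pi - leaves a) Pi) ` span_of G lab g P (leaves a)
     = (\<lambda>Pi. restr (leaves Pi - leaves b) Pi) ` span_of G lab g P (leaves b)" using img .
    show "leaves a \<in> span_partition G lab g P" using s1.in_partition .
    show "leaves b \<in> span_partition G lab g P" using s2.in_partition .
  qed
qed

end
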